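(* Let $n\ge2$, $q_1,q_2\in\mathbb{C}$ with $q_1q_2\ne0$ and $q=-q_2/q_1$ not a root of unity, and put $a=q/(1+q)$, $b=1/(1+q)$. Let $\overline{G}$ be the Zariski closure in $\mathrm{GL}_{n-1}(\mathbb{C})$ of $\rho(B_n)$, matrices being taken with respect to the basis $f_1,\dots,f_{n-1}$ of $\mathbf{F}$. (a) If $q_1^{n-2}q_2$ is not a root of unity, then for each $i=1,\dots,n-1$, $\overline{G}$ contains the one-parameter subgroup $H_i$ consisting of the matrices \[(1-\delta_{i,1})b(1-z)e_{i,i-1}+z\,e_{ii}+(1-\delta_{i,n-1})a(1-z)e_{i,i+1}+E(i),\qquad z\in\mathbb{C}\setminus\{0\}.\] (b) If $q_1^{n-2}q_2$ is a root of unity, then for each $i=1,\dots,n-1$, $\overline{G}$ contains the one-parameter subgroup $K_i$ consisting of the matrices \[(1-\delta_{i,1})b(w-w^{2-n})e_{i,i-1}+w^{2-n}e_{ii}+(1-\delta_{i,n-1})a(w-w^{2-n})e_{i,i+1}+w\,E(i),\qquad w\in\mathbb{C}\setminus\{0\}.\]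
   Context: $B_n$ is Artin's braid group with generators $\sigma_1,\dots,\sigma_{n-1}$. $\mathbf{E}=\mathbb{C}^n$ with basis $e_1,\dots,e_n$ carries the generalized Burau representation $\sigma_ie_j=q_1e_j$ ($j\ne i,i+1$), $\sigma_ie_{i+1}=-q_2e_i$, $\sigma_ie_i=(q_1+q_2)e_i+q_1e_{i+1}$. Let $f_i=q_2e_i+q_1e_{i+1}$ ($1\le i\le n-1$), $\mathbf{F}=\mathrm{span}(f_1,\dots,f_{n-1})$ (a $B_n$-submodule), and $\rho:B_n\to\mathrm{GL}(\mathbf{F})\cong\mathrm{GL}_{n-1}(\mathbb{C})$ the resulting representation, with matrices whose $j$th column is the coordinate vector of the image of $f_j$. Here $e_{ij}$ ($1\le i,j\le n-1$) denote the standard matrix units in $(n-1)\times(n-1)$ matrices, $E(i)=I_{n-1}-e_{ii}$, and $\delta$ is the Kronecker delta (terms with indices outside $1,\dots,n-1$ are absent). *)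

theory Defs
  imports "Jordan_Normal_Form.Determinant"
begin

(* Matrices are Jordan_Normal_Form complex matrices of size (n-1) x (n-1).
   Paper indices 1..n-1 correspond to 0-based JNF indices 0..n-2; the
   helper functions below take 1-based (paper) indices. *)

definition root_of_unity :: "complex \<Rightarrow> bool" where
  "root_of_unity x \<longleftrightarrow> (\<exists>k::nat. k > 0 \<and> x ^ k = 1)"

definition mat1 :: "nat \<Rightarrow> (nat \<Rightarrow> nat \<Rightarrow> complex) \<Rightarrow> complex mat" where
  "mat1 m f = mat m m (\<lambda>(r, c). f (r + 1) (c + 1))"

(* Generalized Burau action of sigma_i on E = C^n, vectors as coefficient
   functions on 1..n:  sigma_i e_j = q1 e_j (j \<noteq> i,i+1),
   sigma_i e_{i+1} = -q2 e_i, sigma_i e_i = (q1+q2) e_i + q1 e_{i+1}. *)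
definition burau_act :: "complex \<Rightarrow> complex \<Rightarrow> nat \<Rightarrow> (nat \<Rightarrow> complex) \<Rightarrow> (nat \<Rightarrow> complex)" where
  "burau_act q1 q2 i v = (\<lambda>k. if k = i then (q1 + q2) * v i - q2 * v (i + 1)
                             else if k = i + 1 then q1 * v i else q1 * v k)"

definition fvec :: "complex \<Rightarrow> complex \<Rightarrow> nat \<Rightarrow> (nat \<Rightarrow> complex)" where
  "fvec q1 q2 j = (\<lambda>k. if k = j then q2 else if k = j + 1 then q1 else 0)"

(* entry (r,c) (1-based) of rho(sigma_i) w.r.t. the basis f_1..f_{n-1};
   column c is the coordinate vector of sigma_i f_c *)
definition rho_entry :: "complex \<Rightarrow> complex \<Rightarrow> nat \<Rightarrow> nat \<Rightarrow> nat \<Rightarrow> complex" where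
  "rho_entry q1 q2 i r c =
     (if r = i then (if c + 1 = i then q1 else if c = i then q2 else if c = i + 1 then - q2 else 0)
      else if r = c then q1 else 0)"

definition rho_gen :: "nat \<Rightarrow> complex \<Rightarrow> complex \<Rightarrow> nat \<Rightarrow> complex mat" where
  "rho_gen n q1 q2 i = mat1 (n - 1) (rho_entry q1 q2 i)"

lemma rho_entry_correct:
  assumes "1 \<le> i" "i \<le> n - 1" "1 \<le> j" "j \<le> n - 1"
  shows "burau_act q1 q2 i (fvec q1 q2 j) =
         (\<lambda>k. \<Sum>r\<in>{1..n-1}. rho_entry q1 q2 i r j * fvec q1 q2 r k)"
proof
  fix k
  have "(\<Sum>r\<in>{1..n-1}. rho_entry q1 q2 i r j * fvec q1 q2 r k) =
        (\<Sum>r\<in>{1..n-1} \<inter> {i, j}. rho_entry q1 q2 i r j * fvec q1 q2 r k)"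
    by (rule sum.mono_neutral_right) (auto simp: rho_entry_def)
  also have "\<dots> = burau_act q1 q2 i (fvec q1 q2 j) k"
    using assms by (cases "i = j") (auto simp: Int_absorb1 rho_entry_def fvec_def burau_act_def algebra_simps)
  finally show "burau_act q1 q2 i (fvec q1 q2 j) k = (\<Sum>r\<in>{1..n-1}. rho_entry q1 q2 i r j * fvec q1 q2 r k)" by simp
qed

(* rho(B_n): the subgroup of GL_{n-1}(C) generated by the rho(sigma_i),
   i = 1..n-1, i.e. the closure of the identity under right multiplication
   by generators and by their inverses *)
inductive_set braid_image :: "nat \<Rightarrow> complex \<Rightarrow> complex \<Rightarrow> complex mat set"
  for n q1 q2 where
  one: "1\<^sub>m (n - 1) \<in> braid_image n q1 q2"
| gen: "A \<in> braid_image n q1 q2 \<Longrightarrow> 1 \<le> i \<Longrightarrow> i \<le> n - 1 \<Longrightarrow>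
        A * rho_gen n q1 q2 i \<in> braid_image n q1 q2"
| geninv: "A \<in> braid_image n q1 q2 \<Longrightarrow> 1 \<le> i \<Longrightarrow> i \<le> n - 1 \<Longrightarrow>
        B \<in> carrier_mat (n - 1) (n - 1) \<Longrightarrow> B * rho_gen n q1 q2 i = 1\<^sub>m (n - 1) \<Longrightarrow>
        A * B \<in> braid_image n q1 q2"

inductive_set poly_fun :: "nat \<Rightarrow> (complex mat \<Rightarrow> complex) set" for m where
  const: "(\<lambda>A. c) \<in> poly_fun m"
| entry: "r < m \<Longrightarrow> c < m \<Longrightarrow> (\<lambda>A. A $$ (r, c)) \<in> poly_fun m"
| add: "p \<in> poly_fun m \<Longrightarrow> p' \<in> poly_fun m \<Longrightarrow> (\<lambda>A. p A + p' A) \<in> poly_fun m"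
| mult: "p \<in> poly_fun m \<Longrightarrow> p' \<in> poly_fun m \<Longrightarrow> (\<lambda>A. p A * p' A) \<in> poly_fun m"

(* Zariski closure of S inside GL_m(C) (GL_m is open in M_m, so its closed
   subsets are traces of Zariski-closed subsets of M_m) *)
definition zariski_closure_GL :: "nat \<Rightarrow> complex mat set \<Rightarrow> complex mat set" where
  "zariski_closure_GL m S =
     {A \<in> carrier_mat m m. det A \<noteq> 0 \<and>
        (\<forall>p \<in> poly_fun m. (\<forall>B \<in> S. p B = 0) \<longrightarrow> p A = 0)}"

definition H_entry :: "nat \<Rightarrow> complex \<Rightarrow> complex \<Rightarrow> nat \<Rightarrow> complex \<Rightarrow> nat \<Rightarrow> nat \<Rightarrow> complex" where
  "H_entry n a b i z r c =
     (if r = i then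
        (if c + 1 = i \<and> i \<noteq> 1 then b * (1 - z)
         else if c = i then z
         else if c = i + 1 \<and> i \<noteq> n - 1 then a * (1 - z) else 0)
      else if r = c then 1 else 0)"

definition K_entry :: "nat \<Rightarrow> complex \<Rightarrow> complex \<Rightarrow> nat \<Rightarrow> complex \<Rightarrow> nat \<Rightarrow> nat \<Rightarrow> complex" where
  "K_entry n a b i w r c =
     (if r = i then
        (if c + 1 = i \<and> i \<noteq> 1 then b * (w - w powi (2 - int n))
         else if c = i then w powi (2 - int n)
         else if c = i + 1 \<and> i \<noteq> n - 1 then a * (w - w powi (2 - int n)) else 0)
      else if r = c then w else 0)"

end

theory Submission
  imports Defs "HOL-Computational_Algebra.Polynomial" "HOL-Library.Infinite_Set"
begin

definition Hm :: "nat \<Rightarrow> complex \<Rightarrow> complex \<Rightarrow> nat \<Rightarrow> complex \<Rightarrow> complex mat" where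
  "Hm n a b i z = mat1 (n - 1) (H_entry n a b i z)"

definition tovec :: "nat \<Rightarrow> (nat \<Rightarrow> complex) \<Rightarrow> complex vec" where
  "tovec m v = vec m (\<lambda>k. v (k + 1))"

definition suppd :: "nat \<Rightarrow> (nat \<Rightarrow> complex) \<Rightarrow> bool" where
  "suppd m v \<longleftrightarrow> v 0 = 0 \<and> (\<forall>k>m. v k = 0)"

definition actz :: "complex \<Rightarrow> complex \<Rightarrow> nat \<Rightarrow> complex \<Rightarrow> (nat \<Rightarrow> complex) \<Rightarrow> (nat \<Rightarrow> complex)" where
  "actz a b i z v = (\<lambda>k. if k = i then b*(1-z)*v(i-1) + z*v i + a*(1-z)*v(i+1) else v k)"

lemma Hm_carrier[simp]: "Hm n a b i z \<in> carrier_mat (n-1) (n-1)"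
  by (simp add: Hm_def mat1_def)

lemma Hm_carrier2[simp]: "Hm n a b i z \<in> carrier_mat (n - Suc 0) (n - Suc 0)"
  by (simp add: Hm_def mat1_def)

lemma tovec_carrier[simp]: "tovec m v \<in> carrier_vec m"
  by (simp add: tovec_def)

lemma H_act:
  assumes i: "1 \<le> i" "i \<le> n - 1" and s: "suppd (n-1) v"
  shows "Hm n a b i z *\<^sub>v tovec (n-1) v = tovec (n-1) (actz a b i z v)"
proof (rule eq_vecI)
  fix r assume r: "r < dim_vec (tovec (n-1) (actz a b i z v))"
  hence r': "r < n - 1" by (simp add: tovec_def)
  have "(Hm n a b i z *\<^sub>v tovec (n-1) v) $ r =
      (\<Sum>l\<in>{0..<n-1}. H_entry n a b i z (r+1) (l+1) * v (l+1))"
    using r' by (simp add: Hm_def mat1_def tovec_def scalar_prod_def row_def)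
  also have "\<dots> = actz a b i z v (r+1)"
  proof (cases "r + 1 = i")
    case False
    have "(\<Sum>l\<in>{0..<n-1}. H_entry n a b i z (r+1) (l+1) * v (l+1))
        = (\<Sum>l\<in>{0..<n-1}. if l = r then v (r+1) else 0)"
      using False by (intro sum.cong) (auto simp: H_entry_def)
    then show ?thesis using False r' by (simp add: actz_def)
  next
    case True
    have "(\<Sum>l\<in>{0..<n-1}. H_entry n a b i z (r+1) (l+1) * v (l+1))
        = (\<Sum>l\<in>{0..<n-1}. (if l = i - 2 then (if 2 \<le> i then b*(1-z)*v(i-1) else 0) else 0)
             + (if l = r then z * v i else 0) + (if l = i then a*(1-z)*v(i+1) else 0))"
      using True r' by (intro sum.cong) (auto simp: H_entry_def)
    also have "\<dots> = actz a b i z v (r+1)"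
      using True r' s i
      by (auto simp: sum.distrib actz_def suppd_def)
    finally show ?thesis .
  qed
  finally show "(Hm n a b i z *\<^sub>v tovec (n-1) v) $ r = tovec (n-1) (actz a b i z v) $ r"
    using r' by (simp add: tovec_def)
qed (simp add: tovec_def Hm_def mat1_def)

definition ev :: "nat \<Rightarrow> nat \<Rightarrow> complex" where
  "ev j = (\<lambda>k. if k = j then 1 else 0)"

lemma tovec_ev: "1 \<le> j \<Longrightarrow> j \<le> m \<Longrightarrow> tovec m (ev j) = unit_vec m (j - 1)"
  by (auto simp: tovec_def ev_def unit_vec_def intro!: eq_vecI)

lemma suppd_ev: "1 \<le> j \<Longrightarrow> j \<le> m \<Longrightarrow> suppd m (ev j)"
  by (auto simp: suppd_def ev_def)

lemma mat_eq_by_ev: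
  assumes A: "A \<in> carrier_mat m m" and B: "B \<in> carrier_mat m m"
    and h: "\<And>j. 1 \<le> j \<Longrightarrow> j \<le> m \<Longrightarrow> A *\<^sub>v tovec m (ev j) = B *\<^sub>v tovec m (ev j)"
  shows "A = B"
proof (rule mat_col_eqI)
  fix i assume i: "i < dim_col B"
  hence i': "i < m" using B by auto
  have cA: "col A i = A *\<^sub>v unit_vec m i"
    using col_mult2[OF A one_carrier_mat i'] A i' by simp
  have cB: "col B i = B *\<^sub>v unit_vec m i"
    using col_mult2[OF B one_carrier_mat i'] B i' by simp
  have t: "tovec m (ev (i+1)) = unit_vec m i" using tovec_ev[of "i+1" m] i' by simp
  show "col A i = col B i" using h[of "i+1"] i' t cA cB by simp
qed (use A B in auto)

lemma suppd_actz: "suppd m v \<Longrightarrow> 1 \<le> i \<Longrightarrow> i \<le> m \<Longrightarrow> suppd m (actz a b i z v)"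
  by (auto simp: suppd_def actz_def)

lemma actz_comp: "1 \<le> i \<Longrightarrow> actz a b i z (actz a b i z' v) = actz a b i (z * z') v"
  by (auto simp: actz_def algebra_simps)

lemma Hm_mult:
  assumes i: "1 \<le> i" "i \<le> n - 1"
  shows "Hm n a b i z * Hm n a b i z' = Hm n a b i (z * z')"
proof (rule mat_eq_by_ev[of _ "n-1"])
  fix j assume j: "1 \<le> j" "j \<le> n - 1"
  have s: "suppd (n-1) (ev j)" using j by (rule suppd_ev)
  show "(Hm n a b i z * Hm n a b i z') *\<^sub>v tovec (n - 1) (ev j) = Hm n a b i (z * z') *\<^sub>v tovec (n - 1) (ev j)"
  proof -
    have "(Hm n a b i z * Hm n a b i z') *\<^sub>v tovec (n - 1) (ev j) = Hm n a b i z *\<^sub>v (Hm n a b i z' *\<^sub>v tovec (n - 1) (ev j))"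
      by (rule assoc_mult_mat_vec[OF Hm_carrier Hm_carrier tovec_carrier])
    also have "\<dots> = Hm n a b i z *\<^sub>v tovec (n - 1) (actz a b i z' (ev j))"
      using H_act[OF i s] by simp
    also have "\<dots> = tovec (n - 1) (actz a b i z (actz a b i z' (ev j)))"
      using H_act[OF i suppd_actz[OF s i]] by simp
    also have "\<dots> = Hm n a b i (z * z') *\<^sub>v tovec (n - 1) (ev j)"
      using H_act[OF i s] i by (simp add: actz_comp)
    finally show ?thesis .
  qed
qed (rule mult_carrier_mat[OF Hm_carrier Hm_carrier] Hm_carrier)+

lemma Hm_one: "Hm n a b i 1 = 1\<^sub>m (n-1)"
  by (rule eq_matI) (auto simp: Hm_def mat1_def H_entry_def)

lemma Hm_det:
  assumes i: "1 \<le> i" "i \<le> n - 1" and z: "z \<noteq> 0"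
  shows "det (Hm n a b i z) \<noteq> 0"
proof -
  have "det (Hm n a b i z) * det (Hm n a b i (1/z)) = 1"
    using det_mult[OF Hm_carrier Hm_carrier, symmetric] Hm_mult[OF i] z by (simp add: Hm_one)
  thus ?thesis by auto
qed

definition actq :: "complex \<Rightarrow> nat \<Rightarrow> (nat \<Rightarrow> complex) \<Rightarrow> (nat \<Rightarrow> complex)" where
  "actq q i v = (\<lambda>k. if k = i then v (i-1) - q * v i + q * v (i+1) else v k)"

lemma actz_q: "1 + q \<noteq> 0 \<Longrightarrow> actz (q/(1+q)) (1/(1+q)) i (-q) v = actq q i v"
  by (auto simp: actz_def actq_def field_simps)

lemma foldr_H_act:
  assumes "set xs \<subseteq> {1..n-1}" "suppd (n-1) v"
  shows "foldr (\<lambda>i A. Hm n a b i z * A) xs (1\<^sub>m (n-1)) *\<^sub>v tovec (n-1) v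
          = tovec (n-1) (foldr (\<lambda>i. actz a b i z) xs v)
       \<and> suppd (n-1) (foldr (\<lambda>i. actz a b i z) xs v)
       \<and> foldr (\<lambda>i A. Hm n a b i z * A) xs (1\<^sub>m (n-1)) \<in> carrier_mat (n-1) (n-1)"
  using assms
proof (induction xs)
  case Nil
  then show ?case by simp
next
  case (Cons x xs)
  let ?F = "foldr (\<lambda>i A. Hm n a b i z * A) xs (1\<^sub>m (n-1))"
  let ?w = "foldr (\<lambda>i. actz a b i z) xs v"
  have x: "1 \<le> x" "x \<le> n - 1" using Cons.prems by auto
  have IH: "?F *\<^sub>v tovec (n-1) v = tovec (n-1) ?w" "suppd (n-1) ?w" "?F \<in> carrier_mat (n-1) (n-1)"
    using Cons by auto
  have "(Hm n a b x z * ?F) *\<^sub>v tovec (n-1) v = Hm n a b x z *\<^sub>v (?F *\<^sub>v tovec (n-1) v)"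
    by (rule assoc_mult_mat_vec[OF Hm_carrier IH(3) tovec_carrier])
  also have "\<dots> = tovec (n-1) (actz a b x z ?w)" using IH(1) H_act[OF x IH(2)] by simp
  moreover have "Hm n a b x z * ?F \<in> carrier_mat (n-1) (n-1)" by (rule mult_carrier_mat[OF Hm_carrier IH(3)])
  ultimately show ?case using IH suppd_actz[OF IH(2) x] by simp
qed

lemma Fe:
  assumes j: "1 \<le> j" "j < n - 1" and k: "1 \<le> k" "k \<le> n"
  shows "foldr (actq q) [k..<n] (ev j) =
    (if j + 2 \<le> k then ev j else if k = j + 1 then (\<lambda>l. ev j l + ev (j+1) l) else ev (j+1))"
  using k(2,1)
proof (induction k rule: inc_induct)
  case base
  have "j + 2 \<le> n" using j by arith
  then show ?case by simp
next
  case (step k)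
  have e: "[k..<n] = k # [Suc k..<n]" using step.hyps by (simp add: upt_conv_Cons)
  show ?case using step j unfolding e
    by (auto simp: actq_def ev_def fun_eq_iff)
qed

lemma Fm:
  assumes n: "2 \<le> n" and k: "1 \<le> k" "k \<le> n"
  shows "foldr (actq q) [k..<n] (ev (n-1)) =
    (if k = n then ev (n-1) else (\<lambda>l. if k \<le> l \<and> l \<le> n - 1 then - (q ^ (n - l)) else 0))"
  using k(2,1)
proof (induction k rule: inc_induct)
  case base
  then show ?case by simp
next
  case (step k)
  have e: "[k..<n] = k # [Suc k..<n]" using step.hyps by (simp add: upt_conv_Cons)
  have p: "q * q ^ (n - Suc k) = q ^ (n - k)" using step.hyps
    by (metis Suc_diff_Suc power_Suc)
  show ?case using step n p unfolding e
    by (auto simp: actq_def ev_def fun_eq_iff)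
qed

definition uvec :: "nat \<Rightarrow> complex \<Rightarrow> nat \<Rightarrow> complex" where
  "uvec n q = (\<lambda>l. if 1 \<le> l \<and> l \<le> n - 1 then - (q ^ (n - l)) else 0)"

lemma Fu:
  assumes n: "2 \<le> n" and k: "2 \<le> k" "k \<le> n"
  shows "foldr (actq q) [k..<n] (uvec n q) = (\<lambda>l. if k \<le> l \<and> l \<le> n - 1 then 0 else uvec n q l)"
  using k(2,1)
proof (induction k rule: inc_induct)
  case base
  then show ?case by (auto simp: fun_eq_iff)
next
  case (step k)
  have e: "[k..<n] = k # [Suc k..<n]" using step.hyps by (simp add: upt_conv_Cons)
  have "n - (k - 1) = Suc (n - k)" using step.hyps step.prems by arith
  hence p: "q * q ^ (n - k) = q ^ (n - (k - 1))" by simp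
  show ?case using step n p unfolding e
    by (auto simp: actq_def uvec_def fun_eq_iff)
qed

lemma Fu1:
  assumes n: "2 \<le> n"
  shows "foldr (actq q) [1..<n] (uvec n q) = (\<lambda>l. q ^ n * ev 1 l)"
proof -
  have e: "[1..<n] = 1 # [2..<n]" using n by (simp add: upt_conv_Cons numeral_2_eq_2)
  have "n = Suc (n - 1)" using n by arith
  hence p: "q * q ^ (n - 1) = q ^ n" by (metis power_Suc)
  show ?thesis unfolding e using Fu[OF n order.refl n] n p
    by (auto simp: actq_def uvec_def ev_def fun_eq_iff)
qed

definition Pm :: "nat \<Rightarrow> complex \<Rightarrow> complex mat" where
  "Pm n q = foldr (\<lambda>i A. Hm n (q/(1+q)) (1/(1+q)) i (-q) * A) [1..<n] (1\<^sub>m (n-1))"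

lemma Pm_carrier: "Pm n q \<in> carrier_mat (n-1) (n-1)"
proof -
  have "suppd (n-1) (\<lambda>_. 0)" by (simp add: suppd_def)
  moreover have "set [1..<n] \<subseteq> {1..n-1}" by auto
  ultimately show ?thesis unfolding Pm_def using foldr_H_act[of "[1..<n]" n] by blast
qed

lemma Pm_act:
  assumes q: "1 + q \<noteq> 0" and s: "suppd (n-1) v"
  shows "Pm n q *\<^sub>v tovec (n-1) v = tovec (n-1) (foldr (actq q) [1..<n] v)"
proof -
  have e: "(\<lambda>i. actz (q/(1+q)) (1/(1+q)) i (-q)) = actq q"
    using actz_q[OF q] by (auto simp: fun_eq_iff)
  have sub: "set [1..<n] \<subseteq> {1..n-1}" by auto
  show ?thesis unfolding Pm_def using foldr_H_act[OF sub s, of "q/(1+q)" "1/(1+q)" "-q"] e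
    by simp
qed

lemma suppd_uvec: "suppd (n-1) (uvec n q)"
  by (auto simp: suppd_def uvec_def)

lemma P_ej:
  assumes q: "1 + q \<noteq> 0" and j: "1 \<le> j" "j < n - 1"
  shows "Pm n q *\<^sub>v tovec (n-1) (ev j) = tovec (n-1) (ev (j+1))"
proof -
  have "foldr (actq q) [1..<n] (ev j) = ev (j+1)" using Fe[OF j, of 1 q] j by auto
  thus ?thesis using Pm_act[OF q suppd_ev[OF j(1)]] j by auto
qed

lemma P_em:
  assumes q: "1 + q \<noteq> 0" and n: "2 \<le> n"
  shows "Pm n q *\<^sub>v tovec (n-1) (ev (n-1)) = tovec (n-1) (uvec n q)"
proof -
  have "foldr (actq q) [1..<n] (ev (n-1)) = uvec n q" using Fm[OF n, of 1 q] n by (auto simp: uvec_def)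
  thus ?thesis using Pm_act[OF q suppd_ev[of "n-1" "n-1"]] n by auto
qed

lemma P_u:
  assumes q: "1 + q \<noteq> 0" and n: "2 \<le> n"
  shows "Pm n q *\<^sub>v tovec (n-1) (uvec n q) = q ^ n \<cdot>\<^sub>v tovec (n-1) (ev 1)"
proof -
  have "Pm n q *\<^sub>v tovec (n-1) (uvec n q) = tovec (n-1) (\<lambda>l. q ^ n * ev 1 l)"
    using Pm_act[OF q suppd_uvec] Fu1[OF n] by simp
  thus ?thesis by (auto simp: tovec_def)
qed

lemma pow_Suc_act:
  assumes "P \<in> carrier_mat m m" "v \<in> carrier_vec m"
  shows "(P ^\<^sub>m Suc s) *\<^sub>v v = (P ^\<^sub>m s) *\<^sub>v (P *\<^sub>v v)"
  using assoc_mult_mat_vec[OF pow_carrier_mat[OF assms(1), of s] assms] by simp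

lemma pow_add_act:
  assumes P: "P \<in> carrier_mat m m" and v: "v \<in> carrier_vec m"
  shows "(P ^\<^sub>m (s + t)) *\<^sub>v v = (P ^\<^sub>m s) *\<^sub>v ((P ^\<^sub>m t) *\<^sub>v v)"
  using v
proof (induction t arbitrary: v)
  case 0
  then show ?case using P by simp
next
  case (Suc t)
  have "(P ^\<^sub>m (s + Suc t)) *\<^sub>v v = (P ^\<^sub>m (s + t)) *\<^sub>v (P *\<^sub>v v)"
    using pow_Suc_act[OF P Suc.prems, of "s+t"] by simp
  also have "\<dots> = (P ^\<^sub>m s) *\<^sub>v ((P ^\<^sub>m t) *\<^sub>v (P *\<^sub>v v))"
    using Suc.IH[of "P *\<^sub>v v"] P Suc.prems by (simp add: mult_mat_vec_carrier)
  also have "\<dots> = (P ^\<^sub>m s) *\<^sub>v ((P ^\<^sub>m Suc t) *\<^sub>v v)"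
    using pow_Suc_act[OF P Suc.prems, of t] by simp
  finally show ?case .
qed

lemma P_pow_ej:
  assumes q: "1 + q \<noteq> 0" and j: "1 \<le> j" "j + s \<le> n - 1"
  shows "(Pm n q ^\<^sub>m s) *\<^sub>v tovec (n-1) (ev j) = tovec (n-1) (ev (j+s))"
  using j
proof (induction s arbitrary: j)
  case 0
  then show ?case using Pm_carrier[of n q] by simp
next
  case (Suc s)
  have "(Pm n q ^\<^sub>m Suc s) *\<^sub>v tovec (n-1) (ev j) = (Pm n q ^\<^sub>m s) *\<^sub>v tovec (n-1) (ev (j+1))"
    using pow_Suc_act[OF Pm_carrier tovec_carrier] P_ej[OF q, of j n] Suc.prems by simp
  also have "\<dots> = tovec (n-1) (ev (j+1+s))" using Suc.IH[of "j+1"] Suc.prems by simp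
  finally show ?case by simp
qed

lemma smult_one_act: "v \<in> carrier_vec m \<Longrightarrow> (c \<cdot>\<^sub>m 1\<^sub>m m) *\<^sub>v v = c \<cdot>\<^sub>v (v :: complex vec)"
proof (rule eq_vecI)
  fix i assume v: "v \<in> carrier_vec m" and i: "i < dim_vec (c \<cdot>\<^sub>v v)"
  hence i': "i < m" by simp
  have "((c \<cdot>\<^sub>m 1\<^sub>m m) *\<^sub>v v) $ i = (\<Sum>l\<in>{0..<m}. c * (if l = i then 1 else 0) * v $ l)"
    using v i' by (auto simp: scalar_prod_def intro!: sum.cong)
  also have "\<dots> = (\<Sum>l\<in>{0..<m}. (if l = i then c * v $ l else 0))"
    by (intro sum.cong) auto
  also have "\<dots> = c * v $ i" using i' by simp
  finally show "((c \<cdot>\<^sub>m 1\<^sub>m m) *\<^sub>v v) $ i = (c \<cdot>\<^sub>v v) $ i" using i' v by simp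
qed auto

lemma pow2_act:
  assumes P: "P \<in> carrier_mat m m" and v: "v \<in> carrier_vec m"
  shows "(P ^\<^sub>m 2) *\<^sub>v v = P *\<^sub>v (P *\<^sub>v v)"
proof -
  have "P ^\<^sub>m 2 = P * P" using P by (simp add: numeral_2_eq_2)
  thus ?thesis using assoc_mult_mat_vec[OF P P v] by simp
qed

lemma P_pow_n:
  assumes q: "1 + q \<noteq> 0" and n: "2 \<le> n"
  shows "Pm n q ^\<^sub>m n = q ^ n \<cdot>\<^sub>m 1\<^sub>m (n-1)"
proof (rule mat_eq_by_ev[of _ "n-1"])
  fix j assume j: "1 \<le> j" "j \<le> n - 1"
  let ?P = "Pm n q"
  have PC: "?P \<in> carrier_mat (n-1) (n-1)" by (rule Pm_carrier)
  have ne: "n = (j - 1) + (2 + (n - 1 - j))" using j n by arith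
  have "(?P ^\<^sub>m n) *\<^sub>v tovec (n-1) (ev j)
      = (?P ^\<^sub>m (j - 1)) *\<^sub>v ((?P ^\<^sub>m (2 + (n - 1 - j))) *\<^sub>v tovec (n-1) (ev j))"
    using pow_add_act[OF PC tovec_carrier] ne by metis
  also have "(?P ^\<^sub>m (2 + (n - 1 - j))) *\<^sub>v tovec (n-1) (ev j)
      = (?P ^\<^sub>m 2) *\<^sub>v ((?P ^\<^sub>m (n - 1 - j)) *\<^sub>v tovec (n-1) (ev j))"
    using pow_add_act[OF PC tovec_carrier] by metis
  also have "(?P ^\<^sub>m (n - 1 - j)) *\<^sub>v tovec (n-1) (ev j) = tovec (n-1) (ev (n-1))"
    using P_pow_ej[OF q j(1), of "n-1-j" n] j by simp
  also have "(?P ^\<^sub>m 2) *\<^sub>v tovec (n-1) (ev (n-1)) = q ^ n \<cdot>\<^sub>v tovec (n-1) (ev 1)"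
    using pow2_act[OF PC tovec_carrier] P_em[OF q n] P_u[OF q n] by simp
  also have "(?P ^\<^sub>m (j - 1)) *\<^sub>v (q ^ n \<cdot>\<^sub>v tovec (n-1) (ev 1)) = q ^ n \<cdot>\<^sub>v tovec (n-1) (ev j)"
    using mult_mat_vec[OF pow_carrier_mat[OF PC] tovec_carrier] P_pow_ej[OF q order.refl, of "j-1" n] j by simp
  also have "\<dots> = (q ^ n \<cdot>\<^sub>m 1\<^sub>m (n-1)) *\<^sub>v tovec (n-1) (ev j)"
    using smult_one_act[OF tovec_carrier] by simp
  finally show "(?P ^\<^sub>m n) *\<^sub>v tovec (n-1) (ev j) = (q ^ n \<cdot>\<^sub>m 1\<^sub>m (n-1)) *\<^sub>v tovec (n-1) (ev j)" .
qed (use Pm_carrier[of n q] in auto)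

lemma one_smult_mat': "(1::complex) \<cdot>\<^sub>m A = A"
  by (rule eq_matI) auto

lemma smult_smult_mat': "(a::complex) \<cdot>\<^sub>m (b \<cdot>\<^sub>m M) = (a * b) \<cdot>\<^sub>m M"
  by (rule eq_matI) auto

lemma smult_pow_mat:
  assumes A: "A \<in> carrier_mat m m"
  shows "((x::complex) \<cdot>\<^sub>m A) ^\<^sub>m k = x ^ k \<cdot>\<^sub>m (A ^\<^sub>m k)"
proof (induction k)
  case 0
  then show ?case using A by (simp add: one_smult_mat')
next
  case (Suc k)
  have "(x \<cdot>\<^sub>m A) ^\<^sub>m Suc k = (x ^ k \<cdot>\<^sub>m (A ^\<^sub>m k)) * (x \<cdot>\<^sub>m A)" using Suc by simp
  also have "\<dots> = x ^ k \<cdot>\<^sub>m ((A ^\<^sub>m k) * (x \<cdot>\<^sub>m A))"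
    by (rule mult_smult_assoc_mat[OF pow_carrier_mat[OF A] smult_carrier_mat[OF A]])
  also have "(A ^\<^sub>m k) * (x \<cdot>\<^sub>m A) = x \<cdot>\<^sub>m ((A ^\<^sub>m k) * A)"
    by (rule mult_smult_distrib[OF pow_carrier_mat[OF A] A])
  finally show ?case by (simp add: smult_smult_mat' ac_simps)
qed

lemma one_pow_mat: "(1\<^sub>m m :: complex mat) ^\<^sub>m k = 1\<^sub>m m"
  by (induction k) auto

lemma Hm_pow:
  assumes i: "1 \<le> i" "i \<le> n - 1"
  shows "Hm n a b i z ^\<^sub>m k = Hm n a b i (z ^ k)"
proof (induction k)
  case 0
  then show ?case using Hm_one[of n a b i] by (simp add: Hm_def mat1_def)
next
  case (Suc k)
  then show ?case using Hm_mult[OF i, of a b "z^k" z] by (simp add: ac_simps)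
qed

lemma braid_carrier: "A \<in> braid_image n q1 q2 \<Longrightarrow> A \<in> carrier_mat (n-1) (n-1)"
  by (induction rule: braid_image.induct) (auto simp: rho_gen_def mat1_def)

definition Gmul :: "nat \<Rightarrow> complex \<Rightarrow> complex \<Rightarrow> complex mat \<Rightarrow> bool" where
  "Gmul n q1 q2 X \<longleftrightarrow> X \<in> carrier_mat (n-1) (n-1) \<and> (\<forall>A\<in>braid_image n q1 q2. A * X \<in> braid_image n q1 q2)"

lemma Gmul_gen:
  assumes "1 \<le> i" "i \<le> n - 1" shows "Gmul n q1 q2 (rho_gen n q1 q2 i)"
  unfolding Gmul_def
proof (intro conjI ballI)
  show "rho_gen n q1 q2 i \<in> carrier_mat (n-1) (n-1)" by (simp add: rho_gen_def mat1_def)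
  fix A assume "A \<in> braid_image n q1 q2"
  thus "A * rho_gen n q1 q2 i \<in> braid_image n q1 q2" by (rule braid_image.gen) (fact assms)+
qed

lemma Gmul_mult:
  assumes X: "Gmul n q1 q2 X" and Y: "Gmul n q1 q2 Y"
  shows "Gmul n q1 q2 (X * Y)"
  unfolding Gmul_def
proof (intro conjI ballI)
  show "X * Y \<in> carrier_mat (n-1) (n-1)" using X Y by (auto simp: Gmul_def)
  fix A assume A: "A \<in> braid_image n q1 q2"
  have "A * (X * Y) = (A * X) * Y"
    using X Y braid_carrier[OF A] by (auto simp: Gmul_def assoc_mult_mat)
  thus "A * (X * Y) \<in> braid_image n q1 q2" using X Y A by (auto simp: Gmul_def)
qed

lemma Gmul_one: "Gmul n q1 q2 (1\<^sub>m (n-1))"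
  unfolding Gmul_def
proof (intro conjI ballI)
  fix A assume A: "A \<in> braid_image n q1 q2"
  have "A \<in> carrier_mat (n-1) (n-1)" by (rule braid_carrier[OF A])
  hence "A * 1\<^sub>m (n-1) = A" by (rule right_mult_one_mat)
  thus "A * 1\<^sub>m (n-1) \<in> braid_image n q1 q2" using A by simp
qed simp

lemma Gmul_pow: "Gmul n q1 q2 X \<Longrightarrow> Gmul n q1 q2 (X ^\<^sub>m k)"
proof (induction k)
  case 0
  then show ?case using Gmul_one[of n q1 q2] by (auto simp: Gmul_def)
next
  case (Suc k)
  then show ?case using Gmul_mult by simp
qed

lemma Gmul_in: "Gmul n q1 q2 X \<Longrightarrow> X \<in> braid_image n q1 q2"
  using braid_image.one[of n q1 q2] by (auto simp: Gmul_def)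

lemma Gmul_foldr: "set xs \<subseteq> {1..n-1} \<Longrightarrow> Gmul n q1 q2 (foldr (\<lambda>i A. rho_gen n q1 q2 i * A) xs (1\<^sub>m (n-1)))"
proof (induction xs)
  case Nil
  then show ?case using Gmul_one by simp
next
  case (Cons x xs)
  have "1 \<le> x" "x \<le> n - 1" using Cons.prems by auto
  then show ?case using Gmul_mult[OF Gmul_gen Cons.IH] Cons.prems by simp
qed

lemma rho_gen_H:
  assumes q1: "q1 \<noteq> 0" and q: "1 + q \<noteq> 0" and qd: "q = - q2 / q1" and i: "1 \<le> i" "i \<le> n - 1"
  shows "rho_gen n q1 q2 i = q1 \<cdot>\<^sub>m Hm n (q/(1+q)) (1/(1+q)) i (-q)"
proof (rule eq_matI)
  fix r c assume r: "r < dim_row (q1 \<cdot>\<^sub>m Hm n (q/(1+q)) (1/(1+q)) i (-q))"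
    and c: "c < dim_col (q1 \<cdot>\<^sub>m Hm n (q/(1+q)) (1/(1+q)) i (-q))"
  have q2: "q2 = - q * q1" using qd q1 by (simp add: field_simps)
  show "rho_gen n q1 q2 i $$ (r, c) = (q1 \<cdot>\<^sub>m Hm n (q/(1+q)) (1/(1+q)) i (-q)) $$ (r, c)"
    using r c q q2 by (auto simp: rho_gen_def Hm_def mat1_def rho_entry_def H_entry_def field_simps)
qed (auto simp: rho_gen_def Hm_def mat1_def)

lemma foldr_smult:
  assumes R: "\<forall>i\<in>set xs. R i = c \<cdot>\<^sub>m H i" and H: "\<forall>i. H i \<in> carrier_mat m m"
  shows "foldr (\<lambda>i A. R i * A) xs (1\<^sub>m m) = (c::complex) ^ length xs \<cdot>\<^sub>m foldr (\<lambda>i A. H i * A) xs (1\<^sub>m m)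
       \<and> foldr (\<lambda>i A. H i * A) xs (1\<^sub>m m) \<in> carrier_mat m m"
  using R
proof (induction xs)
  case Nil
  then show ?case by (simp add: one_smult_mat')
next
  case (Cons x xs)
  let ?F = "foldr (\<lambda>i A. H i * A) xs (1\<^sub>m m)"
  have IH: "foldr (\<lambda>i A. R i * A) xs (1\<^sub>m m) = c ^ length xs \<cdot>\<^sub>m ?F" "?F \<in> carrier_mat m m"
    using Cons by auto
  have Hx: "H x \<in> carrier_mat m m" using H by auto
  have "R x * foldr (\<lambda>i A. R i * A) xs (1\<^sub>m m) = (c \<cdot>\<^sub>m H x) * (c ^ length xs \<cdot>\<^sub>m ?F)"
    using IH Cons.prems by simp
  also have "\<dots> = c \<cdot>\<^sub>m (H x * (c ^ length xs \<cdot>\<^sub>m ?F))"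
    by (rule mult_smult_assoc_mat[OF Hx smult_carrier_mat[OF IH(2)]])
  also have "H x * (c ^ length xs \<cdot>\<^sub>m ?F) = c ^ length xs \<cdot>\<^sub>m (H x * ?F)"
    by (rule mult_smult_distrib[OF Hx IH(2)])
  finally show ?case using mult_carrier_mat[OF Hx IH(2)] by (simp add: smult_smult_mat')
qed

lemma poly_fun_laurent:
  assumes "p \<in> poly_fun m"
    and F: "\<forall>r<m. \<forall>c<m. \<exists>Q N. \<forall>x. x \<noteq> 0 \<longrightarrow> F x $$ (r,c) = poly Q x / x ^ N"
  shows "\<exists>Q N. \<forall>x. x \<noteq> 0 \<longrightarrow> p (F x) = poly Q x / (x::complex) ^ N"
  using assms(1)
proof (induction rule: poly_fun.induct)
  case (const c)
  show ?case by (rule exI[of _ "[:c:]"], rule exI[of _ 0]) simp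
next
  case (entry r c)
  then show ?case using F by blast
next
  case (add p p')
  then obtain Q1 N1 Q2 N2 where h1: "\<forall>x. x \<noteq> 0 \<longrightarrow> p (F x) = poly Q1 x / x ^ N1"
    and h2: "\<forall>x. x \<noteq> 0 \<longrightarrow> p' (F x) = poly Q2 x / x ^ N2" by blast
  show ?case
  proof (rule exI[of _ "Q1 * monom 1 N2 + Q2 * monom 1 N1"], rule exI[of _ "N1 + N2"], intro allI impI)
    fix x :: complex assume x: "x \<noteq> 0"
    show "p (F x) + p' (F x) = poly (Q1 * monom 1 N2 + Q2 * monom 1 N1) x / x ^ (N1 + N2)"
      using h1 h2 x by (simp add: poly_monom field_simps power_add)
  qed
next
  case (mult p p')
  then obtain Q1 N1 Q2 N2 where h1: "\<forall>x. x \<noteq> 0 \<longrightarrow> p (F x) = poly Q1 x / x ^ N1"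
    and h2: "\<forall>x. x \<noteq> 0 \<longrightarrow> p' (F x) = poly Q2 x / x ^ N2" by blast
  show ?case
  proof (rule exI[of _ "Q1 * Q2"], rule exI[of _ "N1 + N2"], intro allI impI)
    fix x :: complex assume x: "x \<noteq> 0"
    have e1: "p (F x) = poly Q1 x / x ^ N1" using h1 x by simp
    have e2: "p' (F x) = poly Q2 x / x ^ N2" using h2 x by simp
    show "p (F x) * p' (F x) = poly (Q1 * Q2) x / x ^ (N1 + N2)"
      unfolding e1 e2 by (simp add: power_add)
  qed
qed

lemma laurent_zero:
  assumes f: "\<forall>x. x \<noteq> 0 \<longrightarrow> f x = poly Q x / (x::complex) ^ N"
    and S: "infinite S" "\<forall>x\<in>S. x \<noteq> 0 \<and> f x = 0" and x: "x \<noteq> 0"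
  shows "f x = 0"
proof -
  have "S \<subseteq> {x. poly Q x = 0}" using f S(2) by auto
  hence "Q = 0" using poly_roots_finite[of Q] S(1) finite_subset by blast
  thus ?thesis using f x by simp
qed

lemma pow_inj:
  assumes c: "(c::complex) \<noteq> 0" "\<not> root_of_unity c" and d: "d \<noteq> 0"
  shows "inj (\<lambda>k::nat. d * c ^ k)"
proof (rule injI)
  fix k l assume h: "d * c ^ k = d * c ^ l"
  have nr: "\<And>j. 0 < j \<Longrightarrow> c ^ j \<noteq> 1" using c(2) unfolding root_of_unity_def by blast
  from h have h': "c ^ k = c ^ l" using d by simp
  show "k = l"
  proof (rule ccontr)
    assume "k \<noteq> l"
    then consider "k < l" | "l < k" by arith
    thus False
    proof cases
      case 1
      have "c ^ l = c ^ k * c ^ (l - k)" using 1 by (simp add: power_add[symmetric])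
      hence "c ^ (l - k) = 1" using h' c by simp
      thus False using nr[of "l - k"] 1 by simp
    next
      case 2
      have "c ^ k = c ^ l * c ^ (k - l)" using 2 by (simp add: power_add[symmetric])
      hence "c ^ (k - l) = 1" using h' c by simp
      thus False using nr[of "k - l"] 2 by simp
    qed
  qed
qed

lemma pow_infinite:
  assumes "(c::complex) \<noteq> 0" "\<not> root_of_unity c" "d \<noteq> 0"
  shows "infinite (range (\<lambda>k::nat. d * c ^ k))"
  by (rule range_inj_infinite[OF pow_inj[OF assms]])

lemma elem_in_G:
  assumes n: "2 \<le> n" and q1: "q1 \<noteq> 0" and q: "1 + q \<noteq> 0" and qd: "q = - q2 / q1"
    and i: "1 \<le> i" "i \<le> n - 1"
  shows "((((q1 ^ (n-1)) ^ n * q ^ n) ^ t) * q1 ^ k) \<cdot>\<^sub>m Hm n (q/(1+q)) (1/(1+q)) i ((-q) ^ k)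
           \<in> braid_image n q1 q2"
proof -
  let ?H = "\<lambda>i. Hm n (q/(1+q)) (1/(1+q)) i (-q)"
  let ?Rp = "foldr (\<lambda>i A. rho_gen n q1 q2 i * A) [1..<n] (1\<^sub>m (n-1))"
  let ?c = "(q1 ^ (n-1)) ^ n * q ^ n"
  have R: "\<forall>i\<in>set [1..<n]. rho_gen n q1 q2 i = q1 \<cdot>\<^sub>m ?H i"
    using rho_gen_H[OF q1 q qd] by auto
  have Rp: "?Rp = q1 ^ (n-1) \<cdot>\<^sub>m Pm n q"
  proof -
    have HC': "\<forall>i. ?H i \<in> carrier_mat (n-1) (n-1)" using Hm_carrier by blast
    show ?thesis using foldr_smult[OF R HC'] unfolding Pm_def by simp
  qed
  have G1: "Gmul n q1 q2 ?Rp" by (rule Gmul_foldr) auto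
  have PC: "Pm n q \<in> carrier_mat (n-1) (n-1)" by (rule Pm_carrier)
  have "?Rp ^\<^sub>m n = (q1 ^ (n-1)) ^ n \<cdot>\<^sub>m (Pm n q ^\<^sub>m n)"
    unfolding Rp by (rule smult_pow_mat[OF PC])
  also have "\<dots> = ?c \<cdot>\<^sub>m 1\<^sub>m (n-1)" using P_pow_n[OF q n] by (simp add: smult_smult_mat')
  finally have Rpn: "?Rp ^\<^sub>m n = ?c \<cdot>\<^sub>m 1\<^sub>m (n-1)" .
  have Rpnt: "(?Rp ^\<^sub>m n) ^\<^sub>m t = ?c ^ t \<cdot>\<^sub>m 1\<^sub>m (n-1)"
    unfolding Rpn using smult_pow_mat[OF one_carrier_mat[of "n-1"]] by (simp add: one_pow_mat)
  have Rik: "rho_gen n q1 q2 i ^\<^sub>m k = q1 ^ k \<cdot>\<^sub>m Hm n (q/(1+q)) (1/(1+q)) i ((-q) ^ k)"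
    using rho_gen_H[OF q1 q qd i] smult_pow_mat[OF Hm_carrier, of q1 n "q/(1+q)" "1/(1+q)" i "-q" k]
      Hm_pow[OF i] by simp
  have G2: "Gmul n q1 q2 ((?Rp ^\<^sub>m n) ^\<^sub>m t * rho_gen n q1 q2 i ^\<^sub>m k)"
    by (intro Gmul_mult Gmul_pow G1 Gmul_gen i)
  have HC: "Hm n (q/(1+q)) (1/(1+q)) i ((-q) ^ k) \<in> carrier_mat (n-1) (n-1)" by (rule Hm_carrier)
  have "(?Rp ^\<^sub>m n) ^\<^sub>m t * rho_gen n q1 q2 i ^\<^sub>m k
      = (?c ^ t \<cdot>\<^sub>m 1\<^sub>m (n-1)) * (q1 ^ k \<cdot>\<^sub>m Hm n (q/(1+q)) (1/(1+q)) i ((-q) ^ k))"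
    unfolding Rpnt Rik ..
  also have "\<dots> = ?c ^ t \<cdot>\<^sub>m (1\<^sub>m (n-1) * (q1 ^ k \<cdot>\<^sub>m Hm n (q/(1+q)) (1/(1+q)) i ((-q) ^ k)))"
    by (rule mult_smult_assoc_mat[OF one_carrier_mat smult_carrier_mat[OF HC]])
  also have "\<dots> = (?c ^ t * q1 ^ k) \<cdot>\<^sub>m Hm n (q/(1+q)) (1/(1+q)) i ((-q) ^ k)"
    using left_mult_one_mat[OF smult_carrier_mat[OF HC]] by (simp only: smult_smult_mat')
  finally show ?thesis using Gmul_in[OF G2] by simp
qed

lemma H_entry_poly:
  "H_entry n a b i z R C = poly (if R = i then
        (if C + 1 = i \<and> i \<noteq> 1 then [:b, -b:]
         else if C = i then [:0, 1:]
         else if C = i + 1 \<and> i \<noteq> n - 1 then [:a, -a:] else 0)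
      else if R = C then 1 else 0) z"
  unfolding H_entry_def by (simp add: algebra_simps)

lemma H_laurent:
  "\<forall>r<n-1. \<forall>c<n-1. \<exists>Q N. \<forall>z. z \<noteq> 0 \<longrightarrow> Hm n a b i z $$ (r,c) = poly Q z / z ^ N"
proof (intro allI impI)
  fix r c assume r: "r < n - 1" and c: "c < n - 1"
  have h: "Hm n a b i z $$ (r,c) = H_entry n a b i z (r+1) (c+1)" for z
    using r c by (simp add: Hm_def mat1_def)
  have "\<exists>Q. \<forall>z. H_entry n a b i z (r+1) (c+1) = poly Q z"
    using H_entry_poly[of n a b i _ "r+1" "c+1"] by blast
  then obtain Q where Q: "\<And>z. H_entry n a b i z (r+1) (c+1) = poly Q z" by blast
  have "\<forall>z. z \<noteq> 0 \<longrightarrow> Hm n a b i z $$ (r,c) = poly Q z / z ^ 0" using h Q by simp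
  thus "\<exists>Q N. \<forall>z. z \<noteq> 0 \<longrightarrow> Hm n a b i z $$ (r,c) = poly Q z / z ^ N" by blast
qed

lemma smult_laurent:
  "\<forall>r<m. \<forall>c<m. \<exists>Q N. \<forall>x. (x::complex) \<noteq> 0 \<longrightarrow> (x \<cdot>\<^sub>m M) $$ (r,c) = poly Q x / x ^ N"
  if "M \<in> carrier_mat m m"
proof (intro allI impI)
  fix r c assume r: "r < m" and c: "c < m"
  show "\<exists>Q N. \<forall>x. x \<noteq> 0 \<longrightarrow> (x \<cdot>\<^sub>m M) $$ (r,c) = poly Q x / x ^ N"
    by (rule exI[of _ "[:0, M $$ (r,c):]"], rule exI[of _ 0]) (use r c that in auto)
qed

lemma powi_neg: "(w::complex) \<noteq> 0 \<Longrightarrow> 2 \<le> n \<Longrightarrow> w powi (2 - int n) = 1 / w ^ (n - 2)"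
proof -
  assume w: "w \<noteq> 0" and n: "2 \<le> n"
  have e: "2 - int n = - int (n - 2)" using n by (simp add: of_nat_diff)
  have "w powi (2 - int n) = w powi (- int (n - 2))" by (simp only: e)
  also have "\<dots> = inverse (w powi int (n - 2))" by (rule power_int_minus)
  also have "\<dots> = inverse (w ^ (n - 2))" by (simp only: power_int_of_nat)
  also have "\<dots> = 1 / w ^ (n - 2)" by (simp only: inverse_eq_divide)
  finally show ?thesis .
qed

lemma powi_neg1: "1 \<le> n \<Longrightarrow> (w::complex) powi (1 - int n) = 1 / w ^ (n - 1)"
proof -
  assume n: "1 \<le> n"
  have e: "1 - int n = - int (n - 1)" using n by (simp add: of_nat_diff)
  have "w powi (1 - int n) = w powi (- int (n - 1))" by (simp only: e)
  also have "\<dots> = inverse (w powi int (n - 1))" by (rule power_int_minus)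
  also have "\<dots> = inverse (w ^ (n - 1))" by (simp only: power_int_of_nat)
  also have "\<dots> = 1 / w ^ (n - 1)" by (simp only: inverse_eq_divide)
  finally show ?thesis .
qed

lemma K_entry_poly:
  assumes w: "w \<noteq> 0" and n: "2 \<le> n"
  shows "K_entry n a b i w R C = poly (if R = i then
        (if C + 1 = i \<and> i \<noteq> 1 then monom b (n - 1) - [:b:]
         else if C = i then 1
         else if C = i + 1 \<and> i \<noteq> n - 1 then monom a (n - 1) - [:a:] else 0)
      else if R = C then monom 1 (n - 1) else 0) w / w ^ (n - 2)"
proof -
  have d: "w ^ (n - 2) \<noteq> 0" using w by simp
  have e: "w ^ (n - 1) = w * w ^ (n - 2)"
  proof -
    have "n - 1 = Suc (n - 2)" using n by arith
    thus ?thesis by simp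
  qed
  have p1: "x * (w - 1 / w ^ (n - 2)) = poly (monom x (n - 1) - [:x:]) w / w ^ (n - 2)" for x
    using d unfolding poly_diff poly_monom e by (simp add: field_simps)
  have p3: "poly (monom 1 (n - 1)) w / w ^ (n - 2) = w"
    using d unfolding poly_monom e by simp
  have p2: "poly 1 w / w ^ (n - 2) = 1 / w ^ (n - 2)" by simp
  have K: "K_entry n a b i w R C = (if R = i then
        (if C + 1 = i \<and> i \<noteq> 1 then b * (w - 1 / w ^ (n - 2))
         else if C = i then 1 / w ^ (n - 2)
         else if C = i + 1 \<and> i \<noteq> n - 1 then a * (w - 1 / w ^ (n - 2)) else 0)
      else if R = C then w else 0)"
    unfolding K_entry_def powi_neg[OF w n] ..
  show ?thesis unfolding K
    by (simp only: if_distrib[of "\<lambda>Q. poly Q w / w ^ (n - 2)"] p1 p2 p3 poly_0 div_0)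
qed

lemma K_laurent:
  assumes n: "2 \<le> n"
  shows "\<forall>r<n-1. \<forall>c<n-1. \<exists>Q N. \<forall>w. w \<noteq> 0 \<longrightarrow> mat1 (n-1) (K_entry n a b i w) $$ (r,c) = poly Q w / w ^ N"
proof (intro allI impI)
  fix r c assume r: "r < n - 1" and c: "c < n - 1"
  have h: "mat1 (n-1) (K_entry n a b i w) $$ (r,c) = K_entry n a b i w (r+1) (c+1)" for w
    using r c by (simp add: mat1_def)
  have "\<exists>Q. \<forall>w. w \<noteq> 0 \<longrightarrow> K_entry n a b i w (r+1) (c+1) = poly Q w / w ^ (n - 2)"
    using K_entry_poly[OF _ n, of _ a b i "r+1" "c+1"] by blast
  then obtain Q where Q: "\<And>w. w \<noteq> 0 \<Longrightarrow> K_entry n a b i w (r+1) (c+1) = poly Q w / w ^ (n - 2)" by blast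
  have "\<forall>w. w \<noteq> 0 \<longrightarrow> mat1 (n-1) (K_entry n a b i w) $$ (r,c) = poly Q w / w ^ (n - 2)" using h Q by simp
  thus "\<exists>Q N. \<forall>w. w \<noteq> 0 \<longrightarrow> mat1 (n-1) (K_entry n a b i w) $$ (r,c) = poly Q w / w ^ N" by blast
qed

lemma K_eq:
  assumes w: "w \<noteq> 0"
  shows "mat1 (n-1) (K_entry n a b i w) = w \<cdot>\<^sub>m Hm n a b i (w powi (1 - int n))"
proof -
  have e: "w * w powi (1 - int n) = w powi (2 - int n)"
  proof -
    have "w powi (2 - int n) = w powi (1 + (1 - int n))" by simp
    also have "\<dots> = w powi 1 * w powi (1 - int n)" using w by (intro power_int_add) simp
    finally show ?thesis by simp
  qed
  show ?thesis
    by (rule eq_matI) (auto simp: mat1_def K_entry_def Hm_def H_entry_def algebra_simps e[symmetric])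
qed

lemma rootI: "0 < k \<Longrightarrow> x ^ k = 1 \<Longrightarrow> root_of_unity x"
  unfolding root_of_unity_def by blast

theorem propositionA3:
  fixes n :: nat and q1 q2 :: complex
  assumes "n \<ge> 2"
    and "q1 * q2 \<noteq> 0"
    and "\<not> root_of_unity (- q2 / q1)"
  defines "q \<equiv> - q2 / q1"
  defines "a \<equiv> q / (1 + q)"
  defines "b \<equiv> 1 / (1 + q)"
  defines "Gbar \<equiv> zariski_closure_GL (n - 1) (braid_image n q1 q2)"
  shows "(\<not> root_of_unity (q1 ^ (n - 2) * q2) \<longrightarrow>
            (\<forall>i \<in> {1..n-1}. {mat1 (n - 1) (H_entry n a b i z) | z. z \<noteq> 0} \<subseteq> Gbar))
       \<and> (root_of_unity (q1 ^ (n - 2) * q2) \<longrightarrow>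
            (\<forall>i \<in> {1..n-1}. {mat1 (n - 1) (K_entry n a b i w) | w. w \<noteq> 0} \<subseteq> Gbar))"
proof -
  have q1: "q1 \<noteq> 0" and q2: "q2 \<noteq> 0" using assms(2) by auto
  have qd: "q = - q2 / q1" by (simp add: q_def)
  have nq: "\<not> root_of_unity q" using assms(3) by (simp add: q_def)
  have q0: "q \<noteq> 0" using q1 q2 by (simp add: q_def)
  have q1p: "1 + q \<noteq> 0"
  proof
    assume "1 + q = 0"
    hence "q = -1" by (simp add: add_eq_0_iff)
    hence "q ^ 2 = 1" by simp
    hence "root_of_unity q" unfolding root_of_unity_def by (intro exI[of _ 2]) simp
    thus False using nq by simp
  qed
  have mq: "\<not> root_of_unity (-q)"
  proof
    assume "root_of_unity (-q)"
    then obtain k :: nat where k: "k > 0" "(-q) ^ k = 1" by (auto simp: root_of_unity_def)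
    have "q ^ (2 * k) = ((-q) ^ k) ^ 2" by (simp add: power_mult[symmetric] mult.commute)
    hence "q ^ (2 * k) = 1" using k by simp
    thus False using nq rootI[of "2 * k" q] k by simp
  qed
  have mq0: "-q \<noteq> 0" using q0 by simp
  define c where "c = (q1 ^ (n-1)) ^ n * q ^ n"
  have elem: "((c ^ t) * q1 ^ k) \<cdot>\<^sub>m Hm n a b i ((-q) ^ k) \<in> braid_image n q1 q2"
    if "i \<in> {1..n-1}" for i t k
    using elem_in_G[OF assms(1) q1 q1p qd, of i t k] that by (simp add: a_def b_def c_def)
  have van: "p X = 0" if p: "p \<in> poly_fun (n-1)" and pv: "\<forall>B\<in>braid_image n q1 q2. p B = 0"
      and X: "X \<in> braid_image n q1 q2" for p X
    using pv X by blast
  show ?thesis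
  proof (intro conjI impI ballI subsetI)
    fix i X
    assume nr: "\<not> root_of_unity (q1 ^ (n - 2) * q2)" and i: "i \<in> {1..n-1}"
      and X: "X \<in> {mat1 (n - 1) (H_entry n a b i z) |z. z \<noteq> 0}"
    obtain z where z: "z \<noteq> 0" and Xz: "X = Hm n a b i z" using X by (auto simp: Hm_def)
    have i': "1 \<le> i" "i \<le> n - 1" using i by auto
    have c0: "c \<noteq> 0" using q1 q0 by (simp add: c_def)
    have cnr: "\<not> root_of_unity c"
    proof
      assume "root_of_unity c"
      then obtain k :: nat where k: "k > 0" "c ^ k = 1" by (auto simp: root_of_unity_def)
      have "n - 1 = Suc (n - 2)" using assms(1) by arith
      hence e1: "q1 ^ (n - 1) = q1 * q1 ^ (n - 2)" by simp
      have qq: "q1 * q = - q2" using q1 by (simp add: q_def)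
      have "q1 ^ (n-1) * q = (q1 * q) * q1 ^ (n - 2)" unfolding e1 by (simp add: ac_simps)
      also have "\<dots> = - (q1 ^ (n - 2) * q2)" unfolding qq by (simp add: mult.commute)
      finally have prev: "q1 ^ (n-1) * q = - (q1 ^ (n - 2) * q2)" .
      have c2: "c = (q1 ^ (n-1) * q) ^ n" unfolding c_def by (rule power_mult_distrib[symmetric])
      have cc: "c = (- (q1 ^ (n - 2) * q2)) ^ n" by (simp only: c2 prev)
      have "(q1 ^ (n - 2) * q2) ^ (2 * (n * k)) = (((- (q1 ^ (n - 2) * q2)) ^ n) ^ k) ^ 2"
        by (simp add: power_mult[symmetric] ac_simps)
      hence "(q1 ^ (n - 2) * q2) ^ (2 * (n * k)) = 1" using k cc by simp
      moreover have "2 * (n * k) > 0" using k assms(1) by simp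
      ultimately show False using nr rootI by blast
    qed
    show "X \<in> Gbar"
      unfolding Gbar_def zariski_closure_GL_def
    proof (intro CollectI conjI ballI impI)
      show "X \<in> carrier_mat (n-1) (n-1)" using Xz by simp
      show "det X \<noteq> 0" using Xz Hm_det[OF i' z] by simp
      fix p assume p: "p \<in> poly_fun (n-1)" and pv: "\<forall>B\<in>braid_image n q1 q2. p B = 0"
      have step1: "p (Hm n a b i ((-q) ^ k)) = 0" for k
      proof -
        let ?M = "Hm n a b i ((-q) ^ k)"
        obtain Q N where QN: "\<forall>x. x \<noteq> 0 \<longrightarrow> p (x \<cdot>\<^sub>m ?M) = poly Q x / x ^ N"
          using poly_fun_laurent[OF p smult_laurent[OF Hm_carrier]] by blast
        have S1: "infinite (range (\<lambda>t::nat. q1 ^ k * c ^ t))"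
          by (rule pow_infinite[OF c0 cnr]) (use q1 in simp)
        have S2: "\<forall>x\<in>range (\<lambda>t::nat. q1 ^ k * c ^ t). x \<noteq> 0 \<and> p (x \<cdot>\<^sub>m ?M) = 0"
        proof
          fix x assume "x \<in> range (\<lambda>t::nat. q1 ^ k * c ^ t)"
          then obtain t where t: "x = q1 ^ k * c ^ t" by auto
          have "p (x \<cdot>\<^sub>m ?M) = 0" using pv elem[OF i, of t k] t by (simp add: mult.commute)
          thus "x \<noteq> 0 \<and> p (x \<cdot>\<^sub>m ?M) = 0" using t q1 c0 by simp
        qed
        have "p (1 \<cdot>\<^sub>m ?M) = 0"
          by (rule laurent_zero[of "\<lambda>x. p (x \<cdot>\<^sub>m ?M)", OF QN S1 S2]) simp
        thus ?thesis by (simp add: one_smult_mat')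
      qed
      obtain Q N where QN: "\<forall>x. x \<noteq> 0 \<longrightarrow> p (Hm n a b i x) = poly Q x / x ^ N"
        using poly_fun_laurent[OF p H_laurent] by blast
      have S1: "infinite (range (\<lambda>k::nat. 1 * (-q) ^ k))"
        by (rule pow_infinite[OF mq0 mq]) simp
      have S2: "\<forall>x\<in>range (\<lambda>k::nat. 1 * (-q) ^ k). x \<noteq> 0 \<and> p (Hm n a b i x) = 0"
        using step1 mq0 by auto
      show "p X = 0" using laurent_zero[of "\<lambda>x. p (Hm n a b i x)", OF QN S1 S2 z] Xz by simp
    qed
  next
    fix i X
    assume r: "root_of_unity (q1 ^ (n - 2) * q2)" and i: "i \<in> {1..n-1}"
      and X: "X \<in> {mat1 (n - 1) (K_entry n a b i w) |w. w \<noteq> 0}"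
    obtain w where w: "w \<noteq> 0" and Xw: "X = mat1 (n - 1) (K_entry n a b i w)" using X by auto
    have i': "1 \<le> i" "i \<le> n - 1" using i by auto
    obtain N :: nat where N: "N > 0" "(q1 ^ (n - 2) * q2) ^ N = 1" using r by (auto simp: root_of_unity_def)
    have "n - 1 = Suc (n - 2)" using assms(1) by arith
    hence e1: "q1 ^ (n - 1) = q1 * q1 ^ (n - 2)" by simp
    have qq: "q1 * q = - q2" using q1 by (simp add: q_def)
    have "(-q) * q1 ^ (n - 1) = - ((q1 * q) * q1 ^ (n - 2))" unfolding e1 by (simp add: ac_simps)
    also have "\<dots> = q1 ^ (n - 2) * q2" unfolding qq by (simp add: mult.commute)
    finally have xq: "(-q) * q1 ^ (n - 1) = q1 ^ (n - 2) * q2" .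
    have kk: "((-q) ^ k) * (q1 ^ k) ^ (n - 1) = 1" if Nk: "N dvd k" for k
    proof -
      obtain j where j: "k = N * j" using Nk by auto
      have "((-q) ^ k) * (q1 ^ k) ^ (n - 1) = ((-q) * q1 ^ (n - 1)) ^ k"
        by (simp only: power_mult_distrib power_mult[symmetric] mult.commute[of k "n-1"])
      also have "\<dots> = ((q1 ^ (n - 2) * q2) ^ N) ^ j" unfolding xq j by (simp add: power_mult)
      finally show ?thesis using N by simp
    qed
    have qN0: "q1 ^ N \<noteq> 0" using q1 by simp
    have qNnr: "\<not> root_of_unity (q1 ^ N)"
    proof
      assume "root_of_unity (q1 ^ N)"
      then obtain j :: nat where j: "j > 0" "(q1 ^ N) ^ j = 1" by (auto simp: root_of_unity_def)
      have "((-q) ^ (N * j)) * (q1 ^ (N * j)) ^ (n - 1) = 1" using kk[of "N * j"] by simp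
      moreover have "q1 ^ (N * j) = 1" using j by (simp add: power_mult)
      ultimately have "(-q) ^ (N * j) = 1" by simp
      moreover have "N * j > 0" using N j by simp
      ultimately show False using mq rootI by blast
    qed
    have powi_eq: "(q1 ^ k) powi (1 - int n) = (-q) ^ k" if "N dvd k" for k
    proof -
      have "(q1 ^ k) powi (1 - int n) = 1 / (q1 ^ k) ^ (n - 1)"
        by (rule powi_neg1) (use assms(1) in simp)
      also have "\<dots> = (-q) ^ k" using kk[OF that] q1
        by (simp add: field_simps)
      finally show ?thesis .
    qed
    show "X \<in> Gbar"
      unfolding Gbar_def zariski_closure_GL_def
    proof (intro CollectI conjI ballI impI)
      show "X \<in> carrier_mat (n-1) (n-1)" using Xw by (simp add: mat1_def)
      have wp: "w powi (1 - int n) \<noteq> 0" using w by simp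
      show "det X \<noteq> 0" using Xw K_eq[OF w] Hm_det[OF i' wp] w by simp
      fix p assume p: "p \<in> poly_fun (n-1)" and pv: "\<forall>B\<in>braid_image n q1 q2. p B = 0"
      obtain Q M where QM: "\<forall>x. x \<noteq> 0 \<longrightarrow> p (mat1 (n - 1) (K_entry n a b i x)) = poly Q x / x ^ M"
        using poly_fun_laurent[OF p K_laurent[OF assms(1)]] by blast
      have S1: "infinite (range (\<lambda>t::nat. 1 * (q1 ^ N) ^ t))"
        by (rule pow_infinite[OF qN0 qNnr]) simp
      have S2: "\<forall>x\<in>range (\<lambda>t::nat. 1 * (q1 ^ N) ^ t). x \<noteq> 0 \<and> p (mat1 (n - 1) (K_entry n a b i x)) = 0"
      proof
        fix x assume "x \<in> range (\<lambda>t::nat. 1 * (q1 ^ N) ^ t)"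
        then obtain t where t: "x = q1 ^ (N * t)" by (auto simp: power_mult)
        have x0: "x \<noteq> 0" using t q1 by simp
        have "mat1 (n - 1) (K_entry n a b i x) = x \<cdot>\<^sub>m Hm n a b i (x powi (1 - int n))"
          by (rule K_eq[OF x0])
        also have "\<dots> = ((c ^ 0) * q1 ^ (N * t)) \<cdot>\<^sub>m Hm n a b i ((-q) ^ (N * t))"
          using powi_eq[of "N * t"] t by simp
        finally have "p (mat1 (n - 1) (K_entry n a b i x)) = 0" using pv elem[OF i, of 0 "N * t"] by simp
        thus "x \<noteq> 0 \<and> p (mat1 (n - 1) (K_entry n a b i x)) = 0" using x0 by simp
      qed
      show "p X = 0" using laurent_zero[of "\<lambda>x. p (mat1 (n - 1) (K_entry n a b i x))", OF QM S1 S2 w] Xw by simp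
    qed
  qed
qed

end
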